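(* Let $M'=M[D,K]$ be a compatible minor of the weighted uncertainty matroid $\mathcal{M}$. If there is a basis $B$ of $M'$ and an element $e\in B$ that has the unique minimum weight in $E(M')\setminus\mathrm{span}_{M'}(B\setminus\{e\})$, then $M[D,K\cup\{e\}]$ is a compatible minor of $\mathcal{M}$.
   Context: A weighted uncertainty matroid $\mathcal{M}=(E,\mathcal{I},A,w)$ consists of a matroid $M=(E,\mathcal{I})$ on a finite set $E$, for each $e\in E$ a non-empty finite union $A_e$ of bounded real intervals (each open or closed), a weight $w_e\in A_e$, and a query cost $c_e\ge0$. A minimum-weight basis (MWB) is a basis minimizing total weight. A weight assignment is $w^*$ with $w^*_e\in A_e$, consistent with $Q$ if $w^*_e=w_e$ on $Q$. $Q$ verifies an MWB $B$ if for every weight assignment consistent with $Q$, $B$ is an MWB with respect to it; a certificate for $\mathcal{M}$ is a set verifying some MWB, and $c^*$ denotes the minimum cost $\sum_{e\in Q}c_e$ of a certificate for $\mathcal{M}$. For $D,K\subseteq E$, $M[D,K]$ is the matroid obtained from $M$ by deleting $D$ and contracting $K$, with ground set $E(M[D,K])=E\setminus(D\cup K)$ and weights restricted. $M[D,K]$ is a compatible minor of $\mathcal{M}$ if there is a set $Q$ of cost $c^*$ that verifies an MWB $B$ of $\mathcal{M}$ with $K\subseteq B$ and $D\cap B=\emptyset$. For a matroid $N$ with rank function $r$, $\mathrm{span}_N(X)=\{e: r(X\cup\{e\})=r(X)\}$. *)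

theory Defs
  imports Complex_Main
begin

definition matroid :: "'a set \<Rightarrow> 'a set set \<Rightarrow> bool" where
  "matroid E Ind \<longleftrightarrow>
     finite E \<and> Ind \<subseteq> Pow E \<and> {} \<in> Ind \<and>
     (\<forall>X Y. X \<in> Ind \<longrightarrow> Y \<subseteq> X \<longrightarrow> Y \<in> Ind) \<and>
     (\<forall>X Y. X \<in> Ind \<longrightarrow> Y \<in> Ind \<longrightarrow> card X < card Y \<longrightarrow>
        (\<exists>y \<in> Y - X. insert y X \<in> Ind))"

definition mrank :: "'a set set \<Rightarrow> 'a set \<Rightarrow> nat" where
  "mrank Ind S = Max (card ` {Y. Y \<subseteq> S \<and> Y \<in> Ind})"

definition is_basis :: "'a set set \<Rightarrow> 'a set \<Rightarrow> bool" where
  "is_basis Ind B \<longleftrightarrow> B \<in> Ind \<and> (\<forall>X \<in> Ind. B \<subseteq> X \<longrightarrow> X = B)"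

definition mspan :: "'a set set \<Rightarrow> 'a set \<Rightarrow> 'a set" where
  "mspan Ind X = {e. mrank Ind (X \<union> {e}) = mrank Ind X}"

definition mdelete :: "'a set \<times> 'a set set \<Rightarrow> 'a set \<Rightarrow> 'a set \<times> 'a set set" where
  "mdelete M D = (fst M - D, {X \<in> snd M. X \<inter> D = {}})"

definition mcontract :: "'a set \<times> 'a set set \<Rightarrow> 'a set \<Rightarrow> 'a set \<times> 'a set set" where
  "mcontract M K =
     (fst M - K,
      {X. X \<subseteq> fst M - K \<and>
          mrank (snd M) (X \<union> (K \<inter> fst M)) = card X + mrank (snd M) (K \<inter> fst M)})"

definition minor :: "'a set \<Rightarrow> 'a set set \<Rightarrow> 'a set \<Rightarrow> 'a set \<Rightarrow> 'a set \<times> 'a set set" where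
  "minor E Ind D K = mcontract (mdelete (E, Ind) D) K"

definition oc_interval :: "real set \<Rightarrow> bool" where
  "oc_interval I \<longleftrightarrow> (\<exists>a b. I = {a..b} \<or> I = {a<..<b})"

definition uncertainty_area :: "real set \<Rightarrow> bool" where
  "uncertainty_area S \<longleftrightarrow> S \<noteq> {} \<and>
     (\<exists>F. finite F \<and> (\<forall>I \<in> F. oc_interval I) \<and> S = \<Union>F)"

definition wum :: "'a set \<Rightarrow> 'a set set \<Rightarrow> ('a \<Rightarrow> real set) \<Rightarrow> ('a \<Rightarrow> real) \<Rightarrow> ('a \<Rightarrow> real) \<Rightarrow> bool" where
  "wum E Ind A w c \<longleftrightarrow> matroid E Ind \<and>
     (\<forall>e \<in> E. uncertainty_area (A e) \<and> w e \<in> A e \<and> c e \<ge> 0)"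

definition is_MWB :: "'a set set \<Rightarrow> ('a \<Rightarrow> real) \<Rightarrow> 'a set \<Rightarrow> bool" where
  "is_MWB Ind w B \<longleftrightarrow> is_basis Ind B \<and>
     (\<forall>B'. is_basis Ind B' \<longrightarrow> sum w B \<le> sum w B')"

definition weight_assignment :: "'a set \<Rightarrow> ('a \<Rightarrow> real set) \<Rightarrow> ('a \<Rightarrow> real) \<Rightarrow> bool" where
  "weight_assignment E A w' \<longleftrightarrow> (\<forall>e \<in> E. w' e \<in> A e)"

definition consistent :: "('a \<Rightarrow> real) \<Rightarrow> 'a set \<Rightarrow> ('a \<Rightarrow> real) \<Rightarrow> bool" where
  "consistent w Q w' \<longleftrightarrow> (\<forall>e \<in> Q. w' e = w e)"

definition verifies :: "'a set \<Rightarrow> 'a set set \<Rightarrow> ('a \<Rightarrow> real set) \<Rightarrow> ('a \<Rightarrow> real) \<Rightarrow> 'a set \<Rightarrow> 'a set \<Rightarrow> bool" where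
  "verifies E Ind A w Q B \<longleftrightarrow>
     (\<forall>w'. weight_assignment E A w' \<longrightarrow> consistent w Q w' \<longrightarrow> is_MWB Ind w' B)"

definition certificate :: "'a set \<Rightarrow> 'a set set \<Rightarrow> ('a \<Rightarrow> real set) \<Rightarrow> ('a \<Rightarrow> real) \<Rightarrow> 'a set \<Rightarrow> bool" where
  "certificate E Ind A w Q \<longleftrightarrow> Q \<subseteq> E \<and> (\<exists>B. is_MWB Ind w B \<and> verifies E Ind A w Q B)"

definition cstar :: "'a set \<Rightarrow> 'a set set \<Rightarrow> ('a \<Rightarrow> real set) \<Rightarrow> ('a \<Rightarrow> real) \<Rightarrow> ('a \<Rightarrow> real) \<Rightarrow> real" where
  "cstar E Ind A w c = Min (sum c ` {Q. certificate E Ind A w Q})"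

definition compatible_minor :: "'a set \<Rightarrow> 'a set set \<Rightarrow> ('a \<Rightarrow> real set) \<Rightarrow> ('a \<Rightarrow> real) \<Rightarrow> ('a \<Rightarrow> real) \<Rightarrow> 'a set \<Rightarrow> 'a set \<Rightarrow> bool" where
  "compatible_minor E Ind A w c D K \<longleftrightarrow> D \<subseteq> E \<and> K \<subseteq> E \<and>
     (\<exists>Q B. Q \<subseteq> E \<and> sum c Q = cstar E Ind A w c \<and> is_MWB Ind w B \<and>
            verifies E Ind A w Q B \<and> K \<subseteq> B \<and> D \<inter> B = {})"

end

theory Submission
  imports Defs
begin

lemma mrank_eq_card_iff:
  assumes "finite S" "{} \<in> I"
  shows "mrank I S = card S \<longleftrightarrow> S \<in> I"
proof -
  let ?C = "card ` {Y. Y \<subseteq> S \<and> Y \<in> I}"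
  have fin: "finite ?C" using assms(1) by (simp add: finite_subset)
  have ne: "?C \<noteq> {}" using assms(2) by auto
  have le: "\<forall>x\<in>?C. x \<le> card S" using card_mono assms(1) by auto
  show ?thesis
  proof
    assume "mrank I S = card S"
    then have "card S \<in> ?C" using Max_in[OF fin ne] unfolding mrank_def by simp
    then obtain Y where "Y \<subseteq> S" "Y \<in> I" "card Y = card S" by auto
    then have "Y = S" using card_subset_eq assms(1) by blast
    then show "S \<in> I" using \<open>Y \<in> I\<close> by simp
  next
    assume "S \<in> I"
    then have "card S \<in> ?C" by auto
    then show "mrank I S = card S" unfolding mrank_def using Max_eqI[OF fin] le by blast
  qed
qed

lemma matroid_fin: "matroid E I \<Longrightarrow> X \<in> I \<Longrightarrow> finite X"
  unfolding matroid_def by (meson PowD finite_subset subsetD)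

lemma matroid_sub: "matroid E I \<Longrightarrow> X \<in> I \<Longrightarrow> Y \<subseteq> X \<Longrightarrow> Y \<in> I"
  unfolding matroid_def by blast

lemma matroid_aug: "matroid E I \<Longrightarrow> X \<in> I \<Longrightarrow> Y \<in> I \<Longrightarrow> card X < card Y
   \<Longrightarrow> \<exists>y \<in> Y - X. insert y X \<in> I"
  unfolding matroid_def by blast

lemma aug_to:
  assumes m: "matroid E I" and "X \<in> I" "Z \<in> I" "card X \<le> card Z"
  shows "\<exists>X'. X \<subseteq> X' \<and> X' \<subseteq> X \<union> Z \<and> X' \<in> I \<and> card X' = card Z"
  using assms(2-)
proof (induction "card Z - card X" arbitrary: X)
  case 0
  then show ?case by auto
next
  case (Suc n)
  then have "card X < card Z" by simp
  then obtain y where y: "y \<in> Z - X" "insert y X \<in> I" using matroid_aug[OF m Suc(3,4)] by blast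
  have "finite X" using matroid_fin[OF m Suc(3)] .
  then have c: "card (insert y X) = card X + 1" using y by simp
  then have "n = card Z - card (insert y X)" using Suc(2) by simp
  moreover have "card (insert y X) \<le> card Z" using c \<open>card X < card Z\<close> by simp
  ultimately obtain X' where "insert y X \<subseteq> X'" "X' \<subseteq> insert y X \<union> Z" "X' \<in> I" "card X' = card Z"
    using Suc(1)[OF _ y(2) Suc(4)] by blast
  then show ?case using y by blast
qed

lemma basis_card:
  assumes m: "matroid E I" and B0: "is_basis I B0" and X: "X \<in> I" "card X = card B0"
  shows "is_basis I X"
  unfolding is_basis_def
proof (intro conjI ballI impI)
  show "X \<in> I" by fact
  fix X2 assume X2: "X2 \<in> I" "X \<subseteq> X2"
  show "X2 = X"
  proof (rule ccontr)
    assume "X2 \<noteq> X"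
    then have "X \<subset> X2" using X2 by auto
    then have "card X < card X2" using matroid_fin[OF m X2(1)] psubset_card_mono by blast
    then have "card B0 < card X2" using X by simp
    then obtain y where y: "y \<in> X2 - B0" "insert y B0 \<in> I"
      using matroid_aug[OF m _ X2(1)] B0 unfolding is_basis_def by blast
    then show False using B0 unfolding is_basis_def by blast
  qed
qed

lemma key:
  assumes m: "matroid E I" and B: "B \<in> I" "e \<in> B" and B1: "is_basis I B1" "e \<notin> B1"
  shows "\<exists>f \<in> B1. f \<notin> B - {e} \<and> insert f (B - {e}) \<in> I \<and> insert e (B1 - {f}) \<in> I"
proof -
  define S where "S = B - {e}"
  have SI: "S \<in> I" using matroid_sub[OF m B(1)] S_def by blast
  have finB: "finite B" using matroid_fin[OF m B(1)] .
  have B1I: "B1 \<in> I" using B1 unfolding is_basis_def by blast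
  have finB1: "finite B1" using matroid_fin[OF m B1I] .
  have cB: "card B = card S + 1" using S_def B finB
    by (metis One_nat_def Suc_eq_plus1 card.remove)
  define Y where "Y = {y \<in> B1. y \<in> S \<or> insert y S \<notin> I}"
  have YB1: "Y \<subseteq> B1" using Y_def by blast
  have YI: "Y \<in> I" using matroid_sub[OF m B1I YB1] .
  have claim: "card Z \<le> card S" if Z1: "Z \<subseteq> S \<union> Y" and Z2: "Z \<in> I" for Z
  proof (rule ccontr)
    assume "\<not> card Z \<le> card S"
    then obtain z where "z \<in> Z - S" "insert z S \<in> I" using matroid_aug[OF m SI Z2] by auto
    then show False using Z1 Y_def by blast
  qed
  have "card Y \<le> card S" using claim[of Y] YI by blast
  then obtain Y' where Y': "Y \<subseteq> Y'" "Y' \<subseteq> Y \<union> S" "Y' \<in> I" "card Y' = card S"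
    using aug_to[OF m YI SI] by blast
  have "card Y' < card B" using cB Y' by simp
  then obtain x where x: "x \<in> B - Y'" "insert x Y' \<in> I" using matroid_aug[OF m Y'(3) B(1)] by blast
  have "x = e"
  proof (rule ccontr)
    assume "x \<noteq> e"
    then have "insert x Y' \<subseteq> S \<union> Y" using x Y' S_def by auto
    moreover have "card (insert x Y') = card S + 1" using x Y' matroid_fin[OF m Y'(3)] by simp
    ultimately have "card (insert x Y') \<le> card S" using claim x(2) by blast
    then show False using \<open>card (insert x Y') = card S + 1\<close> by simp
  qed
  then have eY: "insert e Y \<in> I" using matroid_sub[OF m x(2), of "insert e Y"] Y'(1) by blast
  have "Y \<noteq> B1"
  proof
    assume "Y = B1"
    then have "insert e B1 \<in> I" using eY by simp
    then show False using B1 unfolding is_basis_def by blast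
  qed
  then have "card Y < card B1" using YB1 finB1 psubset_card_mono by blast
  moreover have "e \<notin> Y" using YB1 B1 by blast
  ultimately have "card (insert e Y) \<le> card B1" using finite_subset[OF YB1 finB1] by simp
  then obtain J where J: "insert e Y \<subseteq> J" "J \<subseteq> insert e Y \<union> B1" "J \<in> I" "card J = card B1"
    using aug_to[OF m eY B1I] by blast
  have Jeq: "J = insert e (B1 \<inter> J)" using J YB1 by blast
  have "card J = card (B1 \<inter> J) + 1" using Jeq B1(2) finB1
    by (metis Int_iff Suc_eq_plus1 card_insert_disjoint finite_Int)
  moreover have "card B1 = card (B1 \<inter> J) + card (B1 - J)" using finB1
    by (metis Int_commute add.commute card_Diff_subset_Int card_Int_Diff finite_Int inf.cobounded2)
  ultimately have "card (B1 - J) = 1" using J by simp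
  then obtain f where f: "B1 - J = {f}" using card_1_singletonE by blast
  have fB1: "f \<in> B1" and fJ: "f \<notin> J" using f by auto
  then have "f \<notin> Y" using J by blast
  then have "f \<notin> S" "insert f S \<in> I" using Y_def fB1 by auto
  moreover have "insert e (B1 - {f}) = J" using Jeq f by blast
  ultimately show ?thesis using fB1 J S_def by auto
qed

theorem mainTheorem10:
  fixes E :: "'a set" and Ind :: "'a set set" and A :: "'a \<Rightarrow> real set"
    and w c :: "'a \<Rightarrow> real" and D K B :: "'a set" and e :: 'a
  assumes "wum E Ind A w c"
    and "compatible_minor E Ind A w c D K"
    and "is_basis (snd (minor E Ind D K)) B"
    and "e \<in> B"
    and "e \<in> fst (minor E Ind D K) - mspan (snd (minor E Ind D K)) (B - {e})"
    and "\<forall>f \<in> fst (minor E Ind D K) - mspan (snd (minor E Ind D K)) (B - {e}).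
           f \<noteq> e \<longrightarrow> w e < w f"
  shows "compatible_minor E Ind A w c D (K \<union> {e})"
proof -
  have m: "matroid E Ind" using assms(1) unfolding wum_def by blast
  have finE: "finite E" using m unfolding matroid_def by blast
  have emp: "{} \<in> Ind" using m unfolding matroid_def by blast
  obtain Q B0 where cm: "D \<subseteq> E" "K \<subseteq> E" "Q \<subseteq> E" "sum c Q = cstar E Ind A w c"
     "is_MWB Ind w B0" "verifies E Ind A w Q B0" "K \<subseteq> B0" "D \<inter> B0 = {}"
    using assms(2) unfolding compatible_minor_def by blast
  have B0b: "is_basis Ind B0" using cm(5) unfolding is_MWB_def by blast
  have B0I: "B0 \<in> Ind" using B0b unfolding is_basis_def by blast
  have B0E: "B0 \<subseteq> E" using B0I m unfolding matroid_def by blast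
  have KI: "K \<in> Ind" using matroid_sub[OF m B0I cm(7)] .
  have KD: "K \<inter> D = {}" using cm by blast
  define IM where "IM = {X. X \<subseteq> E - D - K \<and> X \<union> K \<in> Ind}"
  have fstm: "fst (minor E Ind D K) = E - D - K"
    unfolding minor_def mcontract_def mdelete_def by auto
  define Ind' where "Ind' = {X \<in> Ind. X \<inter> D = {}}"
  have emp': "{} \<in> Ind'" using emp Ind'_def by simp
  have KE': "K \<inter> (E - D) = K" using cm KD by blast
  have rK: "mrank Ind' K = card K"
    using mrank_eq_card_iff[OF finite_subset[OF cm(2) finE] emp'] KI KD Ind'_def by blast
  have sndm: "snd (minor E Ind D K) = IM"
    unfolding minor_def mcontract_def mdelete_def IM_def
  proof (simp only: snd_conv fst_conv KE' flip: Ind'_def, intro Collect_cong conj_cong refl)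
    fix X assume X: "X \<subseteq> E - D - K"
    have fX: "finite (X \<union> K)" using X cm(2) finE by (meson Diff_subset finite_Un finite_subset subset_trans)
    have "card (X \<union> K) = card X + card K" using X fX by (subst card_Un_disjoint) auto
    then have "(mrank Ind' (X \<union> K) = card X + mrank Ind' K) = (mrank Ind' (X \<union> K) = card (X \<union> K))"
      using rK by simp
    also have "\<dots> = (X \<union> K \<in> Ind')" using mrank_eq_card_iff[OF fX emp'] .
    also have "\<dots> = (X \<union> K \<in> Ind)" using X KD Ind'_def by blast
    finally show "(mrank Ind' (X \<union> K) = card X + mrank Ind' K) = (X \<union> K \<in> Ind)" .
  qed
  have mIM: "matroid (E - D - K) IM"
    unfolding matroid_def
  proof (intro conjI allI impI)
    show "finite (E - D - K)" using finE by simp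
    show "IM \<subseteq> Pow (E - D - K)" using IM_def by blast
    show "{} \<in> IM" using IM_def KI by simp
    fix X Y
    { assume "X \<in> IM" "Y \<subseteq> X"
      then show "Y \<in> IM" unfolding IM_def using matroid_sub[OF m, of "X \<union> K" "Y \<union> K"] by blast }
    assume X: "X \<in> IM" and Y: "Y \<in> IM" and c: "card X < card Y"
    have XK: "X \<union> K \<in> Ind" "Y \<union> K \<in> Ind" using X Y IM_def by auto
    have fK: "finite K" using finite_subset[OF cm(2) finE] .
    have fX: "finite X" "finite Y" using X Y IM_def finE by (auto intro: finite_subset)
    have "card (X \<union> K) = card X + card K" using X fX fK IM_def by (subst card_Un_disjoint) auto
    moreover have "card (Y \<union> K) = card Y + card K" using Y fX fK IM_def by (subst card_Un_disjoint) auto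
    ultimately have "card (X \<union> K) < card (Y \<union> K)" using c by simp
    then obtain y where y: "y \<in> (Y \<union> K) - (X \<union> K)" "insert y (X \<union> K) \<in> Ind"
      using matroid_aug[OF m XK] by blast
    then have "insert y X \<in> IM" using X Y IM_def by auto
    then show "\<exists>y\<in>Y - X. insert y X \<in> IM" using y by blast
  qed
  define B1 where "B1 = B0 - K"
  have B1b: "is_basis IM B1" unfolding is_basis_def
  proof (intro conjI ballI impI)
    have "B1 \<union> K = B0" using B1_def cm(7) by blast
    then show "B1 \<in> IM" unfolding IM_def B1_def using B0E cm(8) B0I by auto
    fix X assume "X \<in> IM" "B1 \<subseteq> X"
    then have "X \<union> K \<in> Ind" "B0 \<subseteq> X \<union> K" "X \<subseteq> E - D - K" using IM_def B1_def by auto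
    then have "X \<union> K = B0" using B0b unfolding is_basis_def by blast
    then show "X = B1" using \<open>X \<subseteq> E - D - K\<close> B1_def by blast
  qed
  have BIM: "B \<in> IM" using assms(3) sndm unfolding is_basis_def by simp
  have eE: "e \<in> E - D - K" using assms(5) fstm by simp
  have eB0: "e \<in> B0"
  proof (rule ccontr)
    assume "e \<notin> B0"
    then have "e \<notin> B1" using B1_def by simp
    then obtain f where f: "f \<in> B1" "f \<notin> B - {e}" "insert f (B - {e}) \<in> IM" "insert e (B1 - {f}) \<in> IM"
      using key[OF mIM BIM assms(4) B1b] by blast
    have fne: "f \<noteq> e" using f(1) \<open>e \<notin> B1\<close> by blast
    have empIM: "{} \<in> IM" using mIM unfolding matroid_def by blast
    have SIM: "B - {e} \<in> IM" using matroid_sub[OF mIM BIM] by blast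
    have finS: "finite (B - {e})" using matroid_fin[OF mIM SIM] .
    have r1: "mrank IM (B - {e}) = card (B - {e})" using mrank_eq_card_iff[OF finS empIM] SIM by blast
    have r2: "mrank IM (B - {e} \<union> {f}) = card (B - {e}) + 1"
      using mrank_eq_card_iff[of "insert f (B - {e})" IM] finS empIM f(2,3) by simp
    have "f \<notin> mspan IM (B - {e})" unfolding mspan_def using r1 r2 by simp
    moreover have "f \<in> E - D - K" using f(1) B1b mIM B1_def B0E cm(8) by blast
    ultimately have wef: "w e < w f" using assms(6) fstm sndm fne by blast
    define B0' where "B0' = insert e (B0 - {f})"
    have "B0' = insert e (B1 - {f}) \<union> K" using B0'_def B1_def cm(7) f(1) eE by auto
    then have B0'I: "B0' \<in> Ind" using f(4) IM_def by simp
    have finB0: "finite B0" using matroid_fin[OF m B0I] .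
    have fB0: "f \<in> B0" using f(1) B1_def by simp
    have "card B0' = card B0" 
    proof -
      have "card B0' = Suc (card (B0 - {f}))" unfolding B0'_def using finB0 \<open>e \<notin> B0\<close> by simp
      also have "\<dots> = card B0" using card.remove[OF finB0 fB0] by simp
      finally show ?thesis .
    qed
    then have "is_basis Ind B0'" using basis_card[OF m B0b B0'I] by simp
    then have le: "sum w B0 \<le> sum w B0'" using cm(5) unfolding is_MWB_def by blast
    have "sum w B0' = w e + (sum w B0 - w f)" using B0'_def finB0 fB0 \<open>e \<notin> B0\<close>
      by (simp add: sum_diff1)
    then show False using le wef by simp
  qed
  show ?thesis unfolding compatible_minor_def using cm eB0 eE by blast
qed

end
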